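(* Consider two $K$-tier open access networks as described in the context, identical (same point processes $\Phi_k$, powers $P_k$, target SIRs $\beta_k$, path loss exponent $\alpha$) and with the same number of antennas $M_k$ in each tier $k$, where in the first network tier $k$ serves $\Psi_k$ users and in the second $\Psi'_k$ users, with $\Psi_k\le\Psi'_k\le M_k$ for all $k$. Then the coverage probability of the first network is greater than or equal to that of the second.
   Context: Downlink $K$-tier cellular network with tiers indexed by $\mathcal{K}=\{1,\dots,K\}$. Tier-$k$ base stations (BSs) are located at the points of a stationary point process $\Phi_k\subset\mathbb{R}^2$ (not necessarily independent across tiers), transmit with per-user power $P_k>0$, have target SIR $\beta_k>0$, have $M_k$ antennas and serve $\Psi_k\le M_k$ users per resource block (positive integers); set $\Delta_k=M_k-\Psi_k+1$. $\alpha$ is the path loss exponent; a typical user is at the origin. Each BS at $x\in\Phi_k$ carries channel-power marks $h_{kx}\sim\Gamma(\Delta_k,1)$ (desired link) and $g_{kx}\sim\Gamma(\Psi_k,1)$ (interfering link), all mutually independent and independent of the point processes. $\mathrm{SIR}(x_k)=\dfrac{P_kh_{kx_k}\|x_k\|^{-\alpha}}{\sum_{j\in\mathcal{K}}\sum_{y\in\Phi_j\setminus\{x_k\}}P_jg_{jy}\|y\|^{-\alpha}}$ for $x_k\in\Phi_k$, and the open access coverage probability is $\mathbb{P}\big(\bigcup_{k\in\mathcal{K}}\{\max_{x_k\in\Phi_k}\mathrm{SIR}(x_k)>\beta_k\}\big)$. $\Gamma(a,1)$ is the Gamma distribution with shape $a$, scale $1$. *)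

theory Defs
  imports "HOL-Probability.Probability"
begin

type_synonym point = "real ^ 2"

text \<open>A configuration of the K-tier network: tier k (for k in 1..K) is the set of
  base station locations phi k; tiers outside 1..K are empty.  Locally finite.\<close>
type_synonym config = "nat \<Rightarrow> point set"

definition lf_configs :: "nat \<Rightarrow> config set" where
  "lf_configs K = {\<phi>. (\<forall>k. k \<notin> {1..K} \<longrightarrow> \<phi> k = {}) \<and>
                        (\<forall>k B. bounded B \<longrightarrow> finite (\<phi> k \<inter> B))}"

definition config_space :: "nat \<Rightarrow> config measure" where
  "config_space K = sigma (lf_configs K)
     {{\<phi> \<in> lf_configs K. card (\<phi> k \<inter> B) = n} | k B n. B \<in> sets borel \<and> bounded B}"

definition stationary :: "nat \<Rightarrow> config measure \<Rightarrow> bool" where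
  "stationary K Q \<longleftrightarrow> (\<forall>v::point. distr Q (config_space K) (\<lambda>\<phi> k. (\<lambda>x. v + x) ` \<phi> k) = Q)"

text \<open>Gamma(a,1) distribution for positive integer shape a (= Erlang).\<close>
definition gamma_dist :: "nat \<Rightarrow> real measure" where
  "gamma_dist a = density lborel (erlang_density (a - 1) 1)"

definition bs_index :: "nat \<Rightarrow> config \<Rightarrow> (nat \<times> point) set" where
  "bs_index K \<phi> = {(k, x). k \<in> {1..K} \<and> x \<in> \<phi> k}"

text \<open>Marks of the BSs of a given configuration: at BS (k,x) the pair
  (h_kx, g_kx) with h ~ Gamma(Delta_k,1), g ~ Gamma(Psi_k,1), all independent.\<close>
definition mark_measure ::
  "nat \<Rightarrow> (nat \<Rightarrow> nat) \<Rightarrow> (nat \<Rightarrow> nat) \<Rightarrow> config \<Rightarrow> ((nat \<times> point) \<Rightarrow> real \<times> real) measure" where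
  "mark_measure K Mant Psi \<phi> =
     PiM (bs_index K \<phi>) (\<lambda>(k, x). gamma_dist (Mant k - Psi k + 1) \<Otimes>\<^sub>M gamma_dist (Psi k))"

definition SIR ::
  "nat \<Rightarrow> real \<Rightarrow> (nat \<Rightarrow> real) \<Rightarrow> config \<Rightarrow> ((nat \<times> point) \<Rightarrow> real \<times> real) \<Rightarrow> nat \<Rightarrow> point \<Rightarrow> ennreal" where
  "SIR K \<alpha> P \<phi> \<omega> k x =
     ennreal (P k * fst (\<omega> (k, x)) * norm x powr (- \<alpha>)) /
     (\<integral>\<^sup>+ jy. ennreal (P (fst jy) * snd (\<omega> jy) * norm (snd jy) powr (- \<alpha>))
        \<partial>count_space {(j, y). j \<in> {1..K} \<and> y \<in> \<phi> j \<and> y \<noteq> x})"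

definition covered ::
  "nat \<Rightarrow> real \<Rightarrow> (nat \<Rightarrow> real) \<Rightarrow> (nat \<Rightarrow> real) \<Rightarrow> config \<Rightarrow> ((nat \<times> point) \<Rightarrow> real \<times> real) \<Rightarrow> bool" where
  "covered K \<alpha> P \<beta> \<phi> \<omega> \<longleftrightarrow> (\<exists>k\<in>{1..K}. \<exists>x\<in>\<phi> k. SIR K \<alpha> P \<phi> \<omega> k x > ennreal (\<beta> k))"

text \<open>Open access coverage probability: marks are independent of the point
  processes, so it is the average over the configuration law Q of the conditional
  coverage probability given the configuration.\<close>
definition coverage_prob ::
  "nat \<Rightarrow> real \<Rightarrow> (nat \<Rightarrow> real) \<Rightarrow> (nat \<Rightarrow> real) \<Rightarrow> (nat \<Rightarrow> nat) \<Rightarrow> (nat \<Rightarrow> nat) \<Rightarrow> config measure \<Rightarrow> ennreal" where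
  "coverage_prob K \<alpha> P \<beta> Mant Psi Q =
     (\<integral>\<^sup>+ \<phi>. ennreal (measure (mark_measure K Mant Psi \<phi>)
        {\<omega> \<in> space (mark_measure K Mant Psi \<phi>). covered K \<alpha> P \<beta> \<phi> \<omega>}) \<partial>Q)"

end

theory Submission
  imports Defs
begin

lemma sets_gamma[simp, measurable_cong]: "sets (gamma_dist a) = sets borel"
  by (simp add: gamma_dist_def)
lemma space_gamma[simp]: "space (gamma_dist a) = UNIV"
  by (simp add: gamma_dist_def)

lemma prob_gamma: "prob_space (gamma_dist a)"
  unfolding gamma_dist_def by (rule prob_space_erlang_density) simp

lemma gamma_nonneg_null: "UNIV \<times> {..<0::real} \<in> null_sets (gamma_dist a \<Otimes>\<^sub>M gamma_dist d)"
proof -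
  interpret G: prob_space "gamma_dist d" by (rule prob_gamma)
  interpret G2: prob_space "gamma_dist a" by (rule prob_gamma)
  have "emeasure (gamma_dist d) {..<0} = 0"
    unfolding gamma_dist_def
    by (subst emeasure_density) (auto simp: erlang_density_def intro!: nn_integral_zero' AE_I2 split: split_indicator)
  then have "emeasure (gamma_dist a \<Otimes>\<^sub>M gamma_dist d) (UNIV \<times> {..<0}) = 0"
    by (subst G.emeasure_pair_measure_Times[where A=UNIV, simplified]) auto
  then show ?thesis by (auto intro: null_setsI)
qed

lemma conv_gamma:
  assumes "0 < a" "0 < d"
  shows "distr (gamma_dist a \<Otimes>\<^sub>M gamma_dist d) (gamma_dist (a+d)) (\<lambda>(u,v). u + \<bar>v\<bar>) = gamma_dist (a + d)"
proof -
  have "distr (gamma_dist a \<Otimes>\<^sub>M gamma_dist d) (gamma_dist (a+d)) (\<lambda>(u,v). u + \<bar>v\<bar>)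
      = distr (gamma_dist a \<Otimes>\<^sub>M gamma_dist d) borel (\<lambda>(u,v). u + v)"
  proof (rule distr_cong_AE)
    show "AE x in gamma_dist a \<Otimes>\<^sub>M gamma_dist d. (case x of (u, v) \<Rightarrow> u + \<bar>v\<bar>) = (case x of (u, v) \<Rightarrow> u + v)"
      by (rule AE_I'[OF gamma_nonneg_null]) (auto simp: space_pair_measure)
  qed auto
  also have "\<dots> = convolution (gamma_dist a) (gamma_dist d)"
    by (simp add: convolution_def)
  also have "\<dots> = density lborel (\<lambda>x. \<integral>\<^sup>+y. ennreal (erlang_density (a-1) 1 (x - y)) * ennreal (erlang_density (d-1) 1 y) \<partial>lborel)"
    unfolding gamma_dist_def
    using prob_space_erlang_density[of 1 "a-1"] prob_space_erlang_density[of 1 "d-1"]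
    by (intro convolution_density) (auto simp: prob_space_def)
  also have "\<dots> = gamma_dist (a + d)"
    unfolding convolution_erlang_density[OF zero_less_one] gamma_dist_def using assms
    by (simp add: Suc_diff_1 )
  finally show ?thesis .
qed

definition Cd :: "nat \<Rightarrow> real measure" where
  "Cd d = (if d = 0 then return borel 0 else gamma_dist d)"

lemma sets_Cd[simp, measurable_cong]: "sets (Cd d) = sets borel"
  by (simp add: Cd_def)
lemma space_Cd[simp]: "space (Cd d) = UNIV"
  by (simp add: Cd_def)
lemma prob_Cd: "prob_space (Cd d)"
  by (simp add: Cd_def prob_gamma prob_space_return)

lemma conv_Cd:
  assumes "0 < a"
  shows "distr (gamma_dist a \<Otimes>\<^sub>M Cd d) (gamma_dist (a+d)) (\<lambda>(u,v). u + \<bar>v\<bar>) = gamma_dist (a + d)"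
proof (cases "d = 0")
  case False
  then show ?thesis using conv_gamma[OF assms, of d] by (simp add: Cd_def)
next
  case True
  interpret R: prob_space "return borel (0::real)" by (rule prob_space_return) simp
  interpret G: prob_space "gamma_dist a" by (rule prob_gamma)
  have null: "UNIV \<times> (UNIV - {0::real}) \<in> null_sets (gamma_dist a \<Otimes>\<^sub>M return borel 0)"
  proof -
    have "emeasure (gamma_dist a \<Otimes>\<^sub>M return borel 0) (UNIV \<times> (UNIV - {0::real})) = 0"
      by (subst R.emeasure_pair_measure_Times[where A=UNIV, simplified]) auto
    then show ?thesis by (auto intro: null_setsI)
  qed
  have "distr (gamma_dist a \<Otimes>\<^sub>M return borel 0) (gamma_dist (a+d)) (\<lambda>(u,v). u + \<bar>v\<bar>)
      = distr (gamma_dist a \<Otimes>\<^sub>M return borel (0::real)) (gamma_dist a) fst"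
  proof (rule distr_cong_AE)
    show "AE x in gamma_dist a \<Otimes>\<^sub>M return borel 0. (case x of (u, v) \<Rightarrow> u + \<bar>v\<bar>) = fst x"
      by (rule AE_I'[OF null]) (auto simp: space_pair_measure)
  next
    have m: "(\<lambda>(u,v). u + \<bar>v\<bar>) \<in> borel \<Otimes>\<^sub>M borel \<rightarrow>\<^sub>M (borel::real measure)" by measurable
    have e: "sets (gamma_dist a \<Otimes>\<^sub>M return borel (0::real)) = sets (borel \<Otimes>\<^sub>M borel)"
      by (intro sets_pair_measure_cong) auto
    show "(\<lambda>(u,v). u + \<bar>v\<bar>) \<in> gamma_dist a \<Otimes>\<^sub>M return borel 0 \<rightarrow>\<^sub>M gamma_dist (a+d)"
      using m measurable_cong_sets[OF e, of "gamma_dist (a+d)" borel] by simp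
  qed (auto simp: True)
  also have "\<dots> = gamma_dist a" by (rule R.distr_pair_fst)
  finally show ?thesis using True by (simp add: Cd_def)
qed

lemma fst_Cd: "distr (gamma_dist a \<Otimes>\<^sub>M Cd d) (gamma_dist a) fst = gamma_dist a"
proof -
  interpret R: prob_space "Cd d" by (rule prob_Cd)
  show ?thesis by (rule R.distr_pair_fst)
qed

lemma distr_PiM_map:
  assumes N: "\<And>i. i \<in> I \<Longrightarrow> prob_space (N i)"
    and f: "\<And>i. i \<in> I \<Longrightarrow> f i \<in> N i \<rightarrow>\<^sub>M M i"
  shows "distr (PiM I N) (PiM I M) (\<lambda>\<omega>. \<lambda>i\<in>I. f i (\<omega> i)) = PiM I (\<lambda>i. distr (N i) (M i) (f i))"
proof -
  let ?D = "\<lambda>i. distr (N i) (M i) (f i)"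
  have F: "(\<lambda>\<omega>. \<lambda>i\<in>I. f i (\<omega> i)) \<in> PiM I N \<rightarrow>\<^sub>M PiM I M"
    proof (rule measurable_restrict)
    fix i assume "i \<in> I"
    show "(\<lambda>\<omega>. f i (\<omega> i)) \<in> PiM I N \<rightarrow>\<^sub>M M i"
      using measurable_component_singleton[OF \<open>i \<in> I\<close>, of N] f[OF \<open>i \<in> I\<close>] by (rule measurable_compose)
  qed
  have PD: "i \<in> I \<Longrightarrow> prob_space (?D i)" for i
    using N f by (simp add: prob_space.prob_space_distr)
  have fs: "\<And>i x. i \<in> I \<Longrightarrow> x \<in> space (N i) \<Longrightarrow> f i x \<in> space (M i)"
    by (rule measurable_space[OF f])
  have sD: "sets (PiM I M) = sets (PiM I ?D)"
    by (intro sets_PiM_cong) auto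
  show ?thesis
  proof (rule measure_eqI_PiM_infinite[symmetric, OF refl])
    show "sets (distr (PiM I N) (PiM I M) (\<lambda>\<omega>. \<lambda>i\<in>I. f i (\<omega> i))) = sets (PiM I ?D)"
      using sD by simp
    show "finite_measure (PiM I ?D)"
      proof -
      have "prob_space (PiM I ?D)" using PD by (intro prob_space_PiM) auto
      then show ?thesis by (simp add: prob_space_def)
    qed
  next
    fix A J assume J: "finite J" "J \<subseteq> I" and A: "\<And>i. i \<in> J \<Longrightarrow> A i \<in> sets (?D i)"
    have A': "\<And>i. i \<in> J \<Longrightarrow> A i \<in> sets (M i)" using A by simp
    have "emeasure (PiM I ?D) (prod_emb I ?D J (Pi\<^sub>E J A)) = (\<Prod>j\<in>J. emeasure (?D j) (A j))"
      using J A PD by (intro emeasure_PiM_emb) auto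
    also have "\<dots> = (\<Prod>j\<in>J. emeasure (N j) (f j -` A j \<inter> space (N j)))"
      using J A' f by (intro prod.cong refl emeasure_distr) auto
    also have "\<dots> = emeasure (PiM I N) (prod_emb I N J (Pi\<^sub>E J (\<lambda>j. f j -` A j \<inter> space (N j))))"
      using J A' f N by (intro emeasure_PiM_emb[symmetric]) (auto intro!: measurable_sets)
    also have "prod_emb I N J (Pi\<^sub>E J (\<lambda>j. f j -` A j \<inter> space (N j)))
        = (\<lambda>\<omega>. \<lambda>i\<in>I. f i (\<omega> i)) -` prod_emb I ?D J (Pi\<^sub>E J A) \<inter> space (PiM I N)"
      proof -
      have AM: "\<And>i. i \<in> J \<Longrightarrow> A i \<subseteq> space (M i)" using A' sets.sets_into_space by blast
      have l: "prod_emb I N J (Pi\<^sub>E J (\<lambda>j. f j -` A j \<inter> space (N j))) = (\<Pi>\<^sub>E i\<in>I. if i \<in> J then f i -` A i \<inter> space (N i) else space (N i))"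
        using J by (intro prod_emb_PiE) auto
      have r: "prod_emb I ?D J (Pi\<^sub>E J A) = (\<Pi>\<^sub>E i\<in>I. if i \<in> J then A i else space (?D i))"
        using J AM by (intro prod_emb_PiE) auto
      show ?thesis unfolding l r
      proof (intro set_eqI iffI)
        fix \<omega> assume w: "\<omega> \<in> (\<Pi>\<^sub>E i\<in>I. if i \<in> J then f i -` A i \<inter> space (N i) else space (N i))"
        have wi: "\<And>i. i \<in> I \<Longrightarrow> \<omega> i \<in> (if i \<in> J then f i -` A i \<inter> space (N i) else space (N i))"
          using w by (simp add: PiE_iff)
        have we: "\<omega> \<in> extensional I" using w by (simp add: PiE_iff)
        have "\<omega> \<in> (\<Pi>\<^sub>E i\<in>I. space (N i))"
          unfolding PiE_iff using we wi by (metis (no_types, lifting) IntE)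
        then have w1: "\<omega> \<in> space (PiM I N)" by (simp add: space_PiM)
        have "(\<lambda>i\<in>I. f i (\<omega> i)) \<in> (\<Pi>\<^sub>E i\<in>I. if i \<in> J then A i else space (?D i))"
          unfolding PiE_iff
        proof (intro conjI ballI)
          fix i assume i: "i \<in> I"
          show "(\<lambda>i\<in>I. f i (\<omega> i)) i \<in> (if i \<in> J then A i else space (?D i))"
          proof (cases "i \<in> J")
            case True then show ?thesis using wi[OF i] i by simp
          next
            case False then show ?thesis using wi[OF i] i fs[OF i] by simp
          qed
        qed simp
        with w1 show "\<omega> \<in> (\<lambda>\<omega>. \<lambda>i\<in>I. f i (\<omega> i)) -` (\<Pi>\<^sub>E i\<in>I. if i \<in> J then A i else space (?D i)) \<inter> space (PiM I N)"
          by blast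
      next
        fix \<omega> assume w: "\<omega> \<in> (\<lambda>\<omega>. \<lambda>i\<in>I. f i (\<omega> i)) -` (\<Pi>\<^sub>E i\<in>I. if i \<in> J then A i else space (?D i)) \<inter> space (PiM I N)"
        then have w1: "\<omega> \<in> (\<Pi>\<^sub>E i\<in>I. space (N i))" by (simp add: space_PiM)
        have w2: "\<And>i. i \<in> J \<Longrightarrow> f i (\<omega> i) \<in> A i"
        proof -
          fix i assume "i \<in> J"
          then have "i \<in> I" using J by auto
          from w have "(\<lambda>i\<in>I. f i (\<omega> i)) i \<in> (if i \<in> J then A i else space (?D i))"
            using \<open>i \<in> I\<close> by (auto simp: PiE_iff)
          then show "f i (\<omega> i) \<in> A i" using \<open>i \<in> I\<close> \<open>i \<in> J\<close> by simp
        qed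
        show "\<omega> \<in> (\<Pi>\<^sub>E i\<in>I. if i \<in> J then f i -` A i \<inter> space (N i) else space (N i))"
          using w1 w2 by (auto simp: PiE_iff)
      qed
    qed
    also have "emeasure (PiM I N) \<dots> = emeasure (distr (PiM I N) (PiM I M) (\<lambda>\<omega>. \<lambda>i\<in>I. f i (\<omega> i))) (prod_emb I ?D J (Pi\<^sub>E J A))"
      using J A' sD by (intro emeasure_distr[symmetric] F) (auto intro!: sets_PiM_I)
    finally show "emeasure (PiM I ?D) (prod_emb I ?D J (Pi\<^sub>E J A)) = emeasure (distr (PiM I N) (PiM I M) (\<lambda>\<omega>. \<lambda>i\<in>I. f i (\<omega> i))) (prod_emb I ?D J (Pi\<^sub>E J A))" .
  qed
qed

lemma inverse_antimono_ennreal: "(b::ennreal) \<le> c \<Longrightarrow> inverse c \<le> inverse b"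
proof (cases "b = 0")
  case False
  assume bc: "b \<le> c"
  show ?thesis
  proof (cases "c = top")
    case False
    then obtain rc where rc: "c = ennreal rc" "0 \<le> rc" by (cases c) auto
    from bc False have "b \<noteq> top" by (auto simp: top_unique)
    then obtain rb where rb: "b = ennreal rb" "0 \<le> rb" by (cases b) auto
    have "0 < rb" using rb \<open>b \<noteq> 0\<close> by (auto simp: le_less)
    moreover have "rb \<le> rc" using bc rb rc by simp
    ultimately show ?thesis using rb rc
      by (simp add: inverse_ennreal ennreal_leI le_imp_inverse_le)
  qed simp
qed simp

lemma divide_antimono_ennreal: "(b::ennreal) \<le> c \<Longrightarrow> a / c \<le> a / b"
  unfolding divide_ennreal_def by (intro mult_left_mono inverse_antimono_ennreal) auto

lemma covered_mono:
  assumes Ppos: "\<And>k. k \<in> {1..K} \<Longrightarrow> P k > 0"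
    and h: "\<And>k x. k \<in> {1..K} \<Longrightarrow> x \<in> \<phi> k \<Longrightarrow> fst (\<omega>' (k,x)) \<le> fst (\<omega> (k,x))"
    and g: "\<And>k x. k \<in> {1..K} \<Longrightarrow> x \<in> \<phi> k \<Longrightarrow> snd (\<omega> (k,x)) \<le> snd (\<omega>' (k,x))"
    and c: "covered K \<alpha> P \<beta> \<phi> \<omega>'"
  shows "covered K \<alpha> P \<beta> \<phi> \<omega>"
proof -
  from c obtain k x where k: "k \<in> {1..K}" and x: "x \<in> \<phi> k" and s: "SIR K \<alpha> P \<phi> \<omega>' k x > ennreal (\<beta> k)"
    unfolding covered_def by blast
  let ?S = "{(j, y). j \<in> {1..K} \<and> y \<in> \<phi> j \<and> y \<noteq> x}"
  have num: "ennreal (P k * fst (\<omega>' (k, x)) * norm x powr (- \<alpha>)) \<le> ennreal (P k * fst (\<omega> (k, x)) * norm x powr (- \<alpha>))"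
    using Ppos[OF k] h[OF k x] by (intro ennreal_leI mult_right_mono mult_left_mono) auto
  have den: "(\<integral>\<^sup>+ jy. ennreal (P (fst jy) * snd (\<omega> jy) * norm (snd jy) powr (- \<alpha>)) \<partial>count_space ?S)
     \<le> (\<integral>\<^sup>+ jy. ennreal (P (fst jy) * snd (\<omega>' jy) * norm (snd jy) powr (- \<alpha>)) \<partial>count_space ?S)"
  proof (rule nn_integral_mono)
    fix jy assume "jy \<in> space (count_space ?S)"
    then obtain j y where jy: "jy = (j, y)" "j \<in> {1..K}" "y \<in> \<phi> j" by auto
    show "ennreal (P (fst jy) * snd (\<omega> jy) * norm (snd jy) powr (- \<alpha>)) \<le> ennreal (P (fst jy) * snd (\<omega>' jy) * norm (snd jy) powr (- \<alpha>))"
      using Ppos[OF jy(2)] g[OF jy(2,3)] jy(1) by (intro ennreal_leI mult_right_mono mult_left_mono) auto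
  qed
  have "SIR K \<alpha> P \<phi> \<omega>' k x \<le> SIR K \<alpha> P \<phi> \<omega> k x"
    unfolding SIR_def
    by (rule order_trans[OF divide_right_mono_ennreal[OF num] divide_antimono_ennreal[OF den]])
  with s have "SIR K \<alpha> P \<phi> \<omega> k x > ennreal (\<beta> k)" by order
  with k x show ?thesis unfolding covered_def by blast
qed

lemma pair1:
  assumes "0 < a" "0 < b"
  shows "distr ((gamma_dist a \<Otimes>\<^sub>M Cd da) \<Otimes>\<^sub>M (gamma_dist b \<Otimes>\<^sub>M Cd db)) (gamma_dist (a+da) \<Otimes>\<^sub>M gamma_dist b)
           (\<lambda>(x,y). ((\<lambda>(u,v). u + \<bar>v\<bar>) x, fst y)) = gamma_dist (a+da) \<Otimes>\<^sub>M gamma_dist b"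
proof -
  have "distr (gamma_dist a \<Otimes>\<^sub>M Cd da) (gamma_dist (a+da)) (\<lambda>(u,v). u + \<bar>v\<bar>) \<Otimes>\<^sub>M distr (gamma_dist b \<Otimes>\<^sub>M Cd db) (gamma_dist b) fst
     = distr ((gamma_dist a \<Otimes>\<^sub>M Cd da) \<Otimes>\<^sub>M (gamma_dist b \<Otimes>\<^sub>M Cd db)) (gamma_dist (a+da) \<Otimes>\<^sub>M gamma_dist b)
           (\<lambda>(x,y). ((\<lambda>(u,v). u + \<bar>v\<bar>) x, fst y))"
  proof (rule pair_measure_distr)
    have m: "(\<lambda>(u,v). u + \<bar>v\<bar>) \<in> borel \<Otimes>\<^sub>M borel \<rightarrow>\<^sub>M (borel::real measure)" by measurable
    have e: "sets (gamma_dist a \<Otimes>\<^sub>M Cd da) = sets (borel \<Otimes>\<^sub>M borel)"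
      by (intro sets_pair_measure_cong) auto
    show "(\<lambda>(u,v). u + \<bar>v\<bar>) \<in> gamma_dist a \<Otimes>\<^sub>M Cd da \<rightarrow>\<^sub>M gamma_dist (a+da)"
      using m measurable_cong_sets[OF e, of "gamma_dist (a+da)" borel] by simp
    have m2: "fst \<in> borel \<Otimes>\<^sub>M borel \<rightarrow>\<^sub>M (borel::real measure)" by measurable
    have e2: "sets (gamma_dist b \<Otimes>\<^sub>M Cd db) = sets (borel \<Otimes>\<^sub>M borel)"
      by (intro sets_pair_measure_cong) auto
    show "fst \<in> gamma_dist b \<Otimes>\<^sub>M Cd db \<rightarrow>\<^sub>M gamma_dist b"
      using m2 measurable_cong_sets[OF e2, of "gamma_dist b" borel] by simp
    interpret prob_space "gamma_dist b" by (rule prob_gamma)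
    show "sigma_finite_measure (distr (gamma_dist b \<Otimes>\<^sub>M Cd db) (gamma_dist b) fst)"
      by (simp add: fst_Cd sigma_finite_measure_axioms)
  qed
  then show ?thesis using conv_Cd[OF assms(1)] fst_Cd by simp
qed

lemma pair2:
  assumes "0 < a" "0 < b"
  shows "distr ((gamma_dist a \<Otimes>\<^sub>M Cd da) \<Otimes>\<^sub>M (gamma_dist b \<Otimes>\<^sub>M Cd db)) (gamma_dist a \<Otimes>\<^sub>M gamma_dist (b+db))
           (\<lambda>(x,y). (fst x, (\<lambda>(u,v). u + \<bar>v\<bar>) y)) = gamma_dist a \<Otimes>\<^sub>M gamma_dist (b+db)"
proof -
  have "distr (gamma_dist a \<Otimes>\<^sub>M Cd da) (gamma_dist a) fst \<Otimes>\<^sub>M distr (gamma_dist b \<Otimes>\<^sub>M Cd db) (gamma_dist (b+db)) (\<lambda>(u,v). u + \<bar>v\<bar>)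
     = distr ((gamma_dist a \<Otimes>\<^sub>M Cd da) \<Otimes>\<^sub>M (gamma_dist b \<Otimes>\<^sub>M Cd db)) (gamma_dist a \<Otimes>\<^sub>M gamma_dist (b+db))
           (\<lambda>(x,y). (fst x, (\<lambda>(u,v). u + \<bar>v\<bar>) y))"
  proof (rule pair_measure_distr)
    have m: "(\<lambda>(u,v). u + \<bar>v\<bar>) \<in> borel \<Otimes>\<^sub>M borel \<rightarrow>\<^sub>M (borel::real measure)" by measurable
    have e: "sets (gamma_dist b \<Otimes>\<^sub>M Cd db) = sets (borel \<Otimes>\<^sub>M borel)"
      by (intro sets_pair_measure_cong) auto
    show "(\<lambda>(u,v). u + \<bar>v\<bar>) \<in> gamma_dist b \<Otimes>\<^sub>M Cd db \<rightarrow>\<^sub>M gamma_dist (b+db)"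
      using m measurable_cong_sets[OF e, of "gamma_dist (b+db)" borel] by simp
    have m2: "fst \<in> borel \<Otimes>\<^sub>M borel \<rightarrow>\<^sub>M (borel::real measure)" by measurable
    have e2: "sets (gamma_dist a \<Otimes>\<^sub>M Cd da) = sets (borel \<Otimes>\<^sub>M borel)"
      by (intro sets_pair_measure_cong) auto
    show "fst \<in> gamma_dist a \<Otimes>\<^sub>M Cd da \<rightarrow>\<^sub>M gamma_dist a"
      using m2 measurable_cong_sets[OF e2, of "gamma_dist a" borel] by simp
    interpret prob_space "gamma_dist (b+db)" by (rule prob_gamma)
    show "sigma_finite_measure (distr (gamma_dist b \<Otimes>\<^sub>M Cd db) (gamma_dist (b+db)) (\<lambda>(u,v). u + \<bar>v\<bar>))"
      by (simp add: conv_Cd[OF assms(2)] sigma_finite_measure_axioms)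
  qed
  then show ?thesis using conv_Cd[OF assms(2)] fst_Cd by simp
qed

lemma meas_restrict_map:
  assumes f: "\<And>i. i \<in> I \<Longrightarrow> f i \<in> N i \<rightarrow>\<^sub>M M i"
  shows "(\<lambda>\<omega>. \<lambda>i\<in>I. f i (\<omega> i)) \<in> PiM I N \<rightarrow>\<^sub>M PiM I M"
proof (rule measurable_restrict)
  fix i assume "i \<in> I"
  show "(\<lambda>\<omega>. f i (\<omega> i)) \<in> PiM I N \<rightarrow>\<^sub>M M i"
    using measurable_component_singleton[OF \<open>i \<in> I\<close>, of N] f[OF \<open>i \<in> I\<close>] by (rule measurable_compose)
qed

lemma cov_phi:
  assumes Ppos: "\<And>k. k \<in> {1..K} \<Longrightarrow> P k > 0"
    and pos: "\<And>k. k \<in> {1..K} \<Longrightarrow> 0 < Psi k"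
    and le1: "\<And>k. k \<in> {1..K} \<Longrightarrow> Psi k \<le> Psi' k"
    and le2: "\<And>k. k \<in> {1..K} \<Longrightarrow> Psi' k \<le> Mant k"
  shows "measure (mark_measure K Mant Psi' \<phi>) {\<omega> \<in> space (mark_measure K Mant Psi' \<phi>). covered K \<alpha> P \<beta> \<phi> \<omega>}
       \<le> measure (mark_measure K Mant Psi \<phi>) {\<omega> \<in> space (mark_measure K Mant Psi \<phi>). covered K \<alpha> P \<beta> \<phi> \<omega>}"
proof -
  define I where "I = bs_index K \<phi>"
  define Nm where "Nm = (\<lambda>(k::nat, x::point). (gamma_dist (Mant k - Psi' k + 1) \<Otimes>\<^sub>M Cd (Psi' k - Psi k)) \<Otimes>\<^sub>M (gamma_dist (Psi k) \<Otimes>\<^sub>M Cd (Psi' k - Psi k)))"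
  define f1 :: "(real \<times> real) \<times> (real \<times> real) \<Rightarrow> real \<times> real" where "f1 = (\<lambda>(x,y). ((\<lambda>(u,v). u + \<bar>v\<bar>) x, fst y))"
  define f2 :: "(real \<times> real) \<times> (real \<times> real) \<Rightarrow> real \<times> real" where "f2 = (\<lambda>(x,y). (fst x, (\<lambda>(u,v). u + \<bar>v\<bar>) y))"
  define M1c where "M1c = (\<lambda>(k::nat, x::point). gamma_dist (Mant k - Psi k + 1) \<Otimes>\<^sub>M gamma_dist (Psi k))"
  define M2c where "M2c = (\<lambda>(k::nat, x::point). gamma_dist (Mant k - Psi' k + 1) \<Otimes>\<^sub>M gamma_dist (Psi' k))"
  have M1: "mark_measure K Mant Psi \<phi> = PiM I M1c" unfolding mark_measure_def I_def M1c_def ..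
  have M2: "mark_measure K Mant Psi' \<phi> = PiM I M2c" unfolding mark_measure_def I_def M2c_def ..
  have kI: "\<And>k x. (k, x) \<in> I \<Longrightarrow> k \<in> {1..K}" unfolding I_def bs_index_def by auto
  have NP: "i \<in> I \<Longrightarrow> prob_space (Nm i)" for i
    by (cases i) (auto simp: Nm_def intro!: prob_space_pair prob_gamma prob_Cd)
  have sN: "sets (Nm i) = sets ((borel \<Otimes>\<^sub>M borel) \<Otimes>\<^sub>M (borel \<Otimes>\<^sub>M borel))" for i
    by (cases i) (auto simp: Nm_def intro!: sets_pair_measure_cong)
  have sM1: "sets (M1c i) = sets (borel \<Otimes>\<^sub>M borel)" for i
    by (cases i) (auto simp: M1c_def intro!: sets_pair_measure_cong)
  have sM2: "sets (M2c i) = sets (borel \<Otimes>\<^sub>M borel)" for i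
    by (cases i) (auto simp: M2c_def intro!: sets_pair_measure_cong)
  have mf1': "f1 \<in> (borel \<Otimes>\<^sub>M borel) \<Otimes>\<^sub>M (borel \<Otimes>\<^sub>M borel) \<rightarrow>\<^sub>M (borel \<Otimes>\<^sub>M borel :: (real \<times> real) measure)"
    unfolding f1_def by measurable
  have mf2': "f2 \<in> (borel \<Otimes>\<^sub>M borel) \<Otimes>\<^sub>M (borel \<Otimes>\<^sub>M borel) \<rightarrow>\<^sub>M (borel \<Otimes>\<^sub>M borel :: (real \<times> real) measure)"
    unfolding f2_def by measurable
  have mf1: "f1 \<in> Nm i \<rightarrow>\<^sub>M M1c i" for i
    using mf1' measurable_cong_sets[OF sN sM1] by simp
  have mf2: "f2 \<in> Nm i \<rightarrow>\<^sub>M M2c i" for i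
    using mf2' measurable_cong_sets[OF sN sM2] by simp
  have d1: "distr (Nm i) (M1c i) f1 = M1c i" if "i \<in> I" for i
  proof (cases i)
    case (Pair k x)
    then have k: "k \<in> {1..K}" using kI that by simp
    have eq: "Mant k - Psi' k + 1 + (Psi' k - Psi k) = Mant k - Psi k + 1" using le1[OF k] le2[OF k] by simp
    show ?thesis using pair1[of "Mant k - Psi' k + 1" "Psi k" "Psi' k - Psi k" "Psi' k - Psi k"] pos[OF k]
      unfolding Pair Nm_def M1c_def f1_def eq by simp
  qed
  have d2: "distr (Nm i) (M2c i) f2 = M2c i" if "i \<in> I" for i
  proof (cases i)
    case (Pair k x)
    then have k: "k \<in> {1..K}" using kI that by simp
    have eq: "Psi k + (Psi' k - Psi k) = Psi' k" using le1[OF k] by simp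
    show ?thesis using pair2[of "Mant k - Psi' k + 1" "Psi k" "Psi' k - Psi k" "Psi' k - Psi k"] pos[OF k]
      unfolding Pair Nm_def M2c_def f2_def eq by simp
  qed
  define F1 where "F1 = (\<lambda>\<omega>. \<lambda>i\<in>I. f1 (\<omega> i))"
  define F2 where "F2 = (\<lambda>\<omega>. \<lambda>i\<in>I. f2 (\<omega> i))"
  have mF1: "F1 \<in> PiM I Nm \<rightarrow>\<^sub>M PiM I M1c" unfolding F1_def by (rule meas_restrict_map[OF mf1])
  have mF2: "F2 \<in> PiM I Nm \<rightarrow>\<^sub>M PiM I M2c" unfolding F2_def by (rule meas_restrict_map[OF mf2])
  have e1: "PiM I M1c = distr (PiM I Nm) (PiM I M1c) F1"
    unfolding F1_def using d1 NP mf1 by (subst distr_PiM_map) (auto intro!: PiM_cong)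
  have e2: "PiM I M2c = distr (PiM I Nm) (PiM I M2c) F2"
    unfolding F2_def using d2 NP mf2 by (subst distr_PiM_map) (auto intro!: PiM_cong)
  have sets12: "sets (PiM I M1c) = sets (PiM I M2c)"
    using sM1 sM2 by (intro sets_PiM_cong) auto
  then have sp12: "space (PiM I M1c) = space (PiM I M2c)" by (rule sets_eq_imp_space_eq)
  define E where "E = {\<omega> \<in> space (PiM I M2c). covered K \<alpha> P \<beta> \<phi> \<omega>}"
  have E1: "{\<omega> \<in> space (PiM I M1c). covered K \<alpha> P \<beta> \<phi> \<omega>} = E" unfolding E_def sp12 ..
  interpret PN: prob_space "PiM I Nm" using NP by (intro prob_space_PiM) auto
  show ?thesis
  proof (cases "E \<in> sets (PiM I M2c)")
    case False
    then show ?thesis unfolding M1 M2 E1 E_def[symmetric] by (simp add: measure_notin_sets)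
  next
    case True
    have sub: "F2 -` E \<inter> space (PiM I Nm) \<subseteq> F1 -` E \<inter> space (PiM I Nm)"
    proof
      fix \<omega> assume w: "\<omega> \<in> F2 -` E \<inter> space (PiM I Nm)"
      then have c2: "covered K \<alpha> P \<beta> \<phi> (F2 \<omega>)" unfolding E_def by simp
      have "F1 \<omega> \<in> space (PiM I M2c)" using measurable_space[OF mF1] w sp12 by auto
      moreover have "covered K \<alpha> P \<beta> \<phi> (F1 \<omega>)"
      proof (rule covered_mono[OF Ppos _ _ c2])
        fix k x assume k: "k \<in> {1..K}" and x: "x \<in> \<phi> k"
        then have "(k, x) \<in> I" unfolding I_def bs_index_def by auto
        then show "fst (F2 \<omega> (k, x)) \<le> fst (F1 \<omega> (k, x))" "snd (F1 \<omega> (k, x)) \<le> snd (F2 \<omega> (k, x))"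
          unfolding F1_def F2_def f1_def f2_def by (auto simp: split_beta)
      qed
      ultimately show "\<omega> \<in> F1 -` E \<inter> space (PiM I Nm)" using w unfolding E_def by auto
    qed
    have "measure (PiM I M2c) E = measure (PiM I Nm) (F2 -` E \<inter> space (PiM I Nm))"
      by (subst e2) (rule measure_distr[OF mF2 True])
    also have "\<dots> \<le> measure (PiM I Nm) (F1 -` E \<inter> space (PiM I Nm))"
      using sub True sets12 by (intro PN.finite_measure_mono measurable_sets[OF mF1]) auto
    also have "\<dots> = measure (PiM I M1c) E"
    proof -
      have E1s: "E \<in> sets (PiM I M1c)" using True sets12 by simp
      have "measure (PiM I M1c) E = measure (PiM I Nm) (F1 -` E \<inter> space (PiM I Nm))"
        by (subst e1) (rule measure_distr[OF mF1 E1s])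
      then show ?thesis by simp
    qed
    finally show ?thesis unfolding M1 M2 E1 E_def[symmetric] .
  qed
qed


theorem corollary1:
  fixes K :: nat and \<alpha> :: real and P \<beta> :: "nat \<Rightarrow> real"
    and Mant Psi Psi' :: "nat \<Rightarrow> nat" and Q :: "config measure"
  assumes "prob_space Q"
    and "sets Q = sets (config_space K)"
    and "stationary K Q"
    and "\<And>k. k \<in> {1..K} \<Longrightarrow> P k > 0"
    and "\<And>k. k \<in> {1..K} \<Longrightarrow> \<beta> k > 0"
    and "\<And>k. k \<in> {1..K} \<Longrightarrow> 0 < Psi k"
    and "\<And>k. k \<in> {1..K} \<Longrightarrow> Psi k \<le> Psi' k"
    and "\<And>k. k \<in> {1..K} \<Longrightarrow> Psi' k \<le> Mant k"
  shows "coverage_prob K \<alpha> P \<beta> Mant Psi Q \<ge> coverage_prob K \<alpha> P \<beta> Mant Psi' Q"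
  unfolding coverage_prob_def
  by (intro nn_integral_mono ennreal_leI cov_phi[OF assms(4,6,7,8)])

end
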